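(* Let $G=(V,E)$ be a graph with $n=|V|$, $m=|E|$, and a proper vertex coloring $c:V\to[q]$, and let $G'$ be the threshold graph constructed from $(G,q)$ as described in the context. Then $G$ contains a clique of size $q$ if and only if there exists $Y\subseteq V(G')$ with $|Y|\le \ell$ and $|D_{G',Y}|\le k$, where $k=(n-q)(2nq-2n+1)+\left(m-\binom{q}{2}\right)(4n+1)$ and $\ell=q+\binom{q}{2}$.
   Context: Diffusion: for a threshold graph $H=(V,E,t)$ with $t:V\to\mathbb{N}$ and $Y\subseteq V$, $D_{H,Y}[1]=\{u\in V\setminus Y: t(u)=0\}$, $D_{H,Y}[\tau]=D_{H,Y}[\tau-1]\cup\{u\in V\setminus Y: |\Gamma_H(u)\cap D_{H,Y}[\tau-1]|\ge t(u)\}$, and $D_{H,Y}$ is the final stable set. Construction of $G'$: let $V_c$ be the nodes of color $c$ and, for distinct $c,d$, $E_{cd}$ the edges between $V_c$ and $V_d$. A parallel-paths gadget of size $h$ between nodes $x,y$ consists of $h$ new "connection" nodes, each adjacent exactly to $x$ and $y$. For each $c\in[q]$ add a node $x_v$ for each $v\in V_c$ (node-selection nodes) and a guard node $g_c$ adjacent to all these $x_v$. For each unordered pair $\{c,d\}$ of distinct colors add a node $x_{u,v}$ for each edge $(u,v)\in E_{cd}$ (edge-selection nodes) and a guard node $g_{cd}$ adjacent to all of them. Assign to each $v\in V$ a distinct $low(v)\in[n]$ and set $high(v)=2n-low(v)$. For each unordered pair $\{c,d\}$ and each of its two colors, say $c$, add two validation nodes $\alpha,\beta$: $\alpha$ is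 joined to each $x_v$ ($v\in V_c$) by a parallel-paths gadget of size $high(v)$ and to each $x_{u,v}$ with $(u,v)\in E_{cd}$, $v\in V_c$, by a parallel-paths gadget of size $low(v)$; $\beta$ is joined to each such $x_v$ by size $low(v)$ and to each such $x_{u,v}$ by size $high(v)$ (symmetrically for color $d$). Finally add a set $B$ of $(n-q)(2nq-2n+1)+\left(m-\binom q2\right)(4n+1)$ independent nodes, each adjacent to every guard node. Thresholds: $0$ for selection nodes; $1$ for connection nodes and nodes of $B$; $d_{G'}(x)-2n+1$ for each validation node $x$; $|V_c|$ for $g_c$; $|E_{cd}|$ for $g_{cd}$. *)

theory Defs
  imports Main
begin

definition nbrs :: "'b set \<Rightarrow> ('b \<Rightarrow> 'b \<Rightarrow> bool) \<Rightarrow> 'b \<Rightarrow> 'b set" where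
  "nbrs VV adj u = {w \<in> VV. adj u w}"

text \<open>diff_stage VV adj t Y tau is the set D_{H,Y}[tau+1] of the paper
(index 0 corresponds to D[1]).\<close>

primrec diff_stage ::
  "'b set \<Rightarrow> ('b \<Rightarrow> 'b \<Rightarrow> bool) \<Rightarrow> ('b \<Rightarrow> nat) \<Rightarrow> 'b set \<Rightarrow> nat \<Rightarrow> 'b set" where
  "diff_stage VV adj t Y 0 = {u \<in> VV - Y. t u = 0}"
| "diff_stage VV adj t Y (Suc tau) =
     diff_stage VV adj t Y tau \<union>
     {u \<in> VV - Y. card (nbrs VV adj u \<inter> diff_stage VV adj t Y tau) \<ge> t u}"

definition diffusion ::
  "'b set \<Rightarrow> ('b \<Rightarrow> 'b \<Rightarrow> bool) \<Rightarrow> ('b \<Rightarrow> nat) \<Rightarrow> 'b set \<Rightarrow> 'b set" where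
  "diffusion VV adj t Y = (\<Union>tau. diff_stage VV adj t Y tau)"

definition is_clique :: "'a set set \<Rightarrow> 'a set \<Rightarrow> bool" where
  "is_clique E K \<longleftrightarrow> (\<forall>u\<in>K. \<forall>v\<in>K. u \<noteq> v \<longrightarrow> {u, v} \<in> E)"

text \<open>Nodes of G':
  XV v            node-selection node x_v
  GC c            guard node g_c
  XE e            edge-selection node x_{u,v} for the edge e = {u,v}
  GE P            guard node g_{cd} for the colour pair P = {c,d}
  Val P c b       validation node for pair P and colour c in P (b = True: alpha, False: beta)
  Conn P c b x i  i-th connection node of the parallel-paths gadget between Val P c b and x
  BN i            i-th node of the set B\<close>

datatype 'a node =
    XV 'a | GC nat | XE "'a set" | GE "nat set"
  | Val "nat set" nat bool | Conn "nat set" nat bool "'a node" nat | BN nat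

definition colpairs :: "nat \<Rightarrow> nat set set" where
  "colpairs q = {{c, d} | c d. c \<in> {1..q} \<and> d \<in> {1..q} \<and> c \<noteq> d}"

definition Ecd :: "'a set set \<Rightarrow> ('a \<Rightarrow> nat) \<Rightarrow> nat set \<Rightarrow> 'a set set" where
  "Ecd E col P = {e \<in> E. col ` e = P}"

definition highv :: "nat \<Rightarrow> ('a \<Rightarrow> nat) \<Rightarrow> 'a \<Rightarrow> nat" where
  "highv n low v = 2 * n - low v"

definition validx :: "nat \<Rightarrow> (nat set \<times> nat \<times> bool) set" where
  "validx q = {(P, c, b) | P c b. P \<in> colpairs q \<and> c \<in> P}"

text \<open>Selection nodes attached to the validation nodes of (P, c), together with
  the vertex v of colour c that determines the gadget size.\<close>
definition gad_attach ::
  "'a set \<Rightarrow> 'a set set \<Rightarrow> ('a \<Rightarrow> nat) \<Rightarrow> nat set \<Rightarrow> nat \<Rightarrow> ('a node \<times> 'a) set" where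
  "gad_attach V E col P c =
     {(XV v, v) | v. v \<in> V \<and> col v = c} \<union>
     {(XE e, v) | e v. e \<in> Ecd E col P \<and> v \<in> e \<and> col v = c}"

definition gad_size :: "nat \<Rightarrow> ('a \<Rightarrow> nat) \<Rightarrow> bool \<Rightarrow> 'a node \<Rightarrow> 'a \<Rightarrow> nat" where
  "gad_size n low b x v =
     (case x of XV _ \<Rightarrow> (if b then highv n low v else low v)
              | _ \<Rightarrow> (if b then low v else highv n low v))"

definition connodes ::
  "'a set \<Rightarrow> 'a set set \<Rightarrow> ('a \<Rightarrow> nat) \<Rightarrow> nat \<Rightarrow> ('a \<Rightarrow> nat) \<Rightarrow> 'a node set" where
  "connodes V E col q low =
     {Conn P c b x i | P c b x v i.
        (P, c, b) \<in> validx q \<and> (x, v) \<in> gad_attach V E col P c \<and>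
        i < gad_size (card V) low b x v}"

definition kval :: "'a set \<Rightarrow> 'a set set \<Rightarrow> nat \<Rightarrow> int" where
  "kval V E q =
     (int (card V) - int q) * (2 * int (card V) * int q - 2 * int (card V) + 1) +
     (int (card E) - int (q choose 2)) * (4 * int (card V) + 1)"

definition lval :: "nat \<Rightarrow> nat" where
  "lval q = q + (q choose 2)"

definition Bnodes :: "'a set \<Rightarrow> 'a set set \<Rightarrow> nat \<Rightarrow> 'a node set" where
  "Bnodes V E q = {BN i | i. i < nat (kval V E q)}"

definition guards :: "'a set set \<Rightarrow> nat \<Rightarrow> 'a node set" where
  "guards E q = GC ` {1..q} \<union> GE ` colpairs q"

definition Gp_V ::
  "'a set \<Rightarrow> 'a set set \<Rightarrow> ('a \<Rightarrow> nat) \<Rightarrow> nat \<Rightarrow> ('a \<Rightarrow> nat) \<Rightarrow> 'a node set" where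
  "Gp_V V E col q low =
     XV ` V \<union> XE ` E \<union> guards E q \<union> (\<lambda>(P, c, b). Val P c b) ` validx q \<union> connodes V E col q low \<union> Bnodes V E q"

definition Gp_E ::
  "'a set \<Rightarrow> 'a set set \<Rightarrow> ('a \<Rightarrow> nat) \<Rightarrow> nat \<Rightarrow> ('a \<Rightarrow> nat) \<Rightarrow> ('a node \<times> 'a node) set" where
  "Gp_E V E col q low =
     {(GC c, XV v) | c v. c \<in> {1..q} \<and> v \<in> V \<and> col v = c}
   \<union> {(GE P, XE e) | P e. P \<in> colpairs q \<and> e \<in> Ecd E col P}
   \<union> {(Conn P c b x i, Val P c b) | P c b x i. Conn P c b x i \<in> connodes V E col q low}
   \<union> {(Conn P c b x i, x) | P c b x i. Conn P c b x i \<in> connodes V E col q low}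
   \<union> {(BN i, g) | i g. BN i \<in> Bnodes V E q \<and> g \<in> guards E q}"

definition Gp_adj ::
  "'a set \<Rightarrow> 'a set set \<Rightarrow> ('a \<Rightarrow> nat) \<Rightarrow> nat \<Rightarrow> ('a \<Rightarrow> nat) \<Rightarrow> 'a node \<Rightarrow> 'a node \<Rightarrow> bool" where
  "Gp_adj V E col q low u w \<longleftrightarrow>
     (u, w) \<in> Gp_E V E col q low \<or> (w, u) \<in> Gp_E V E col q low"

text \<open>For validation nodes the paper's value d(x) - 2n + 1 is taken
  with truncation at 0 (a non-positive threshold means the node is activated
  whenever it is not blocked, exactly as threshold 0).\<close>
definition Gp_t ::
  "'a set \<Rightarrow> 'a set set \<Rightarrow> ('a \<Rightarrow> nat) \<Rightarrow> nat \<Rightarrow> ('a \<Rightarrow> nat) \<Rightarrow> 'a node \<Rightarrow> nat" where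
  "Gp_t V E col q low u =
     (case u of
        XV _ \<Rightarrow> 0
      | XE _ \<Rightarrow> 0
      | Conn _ _ _ _ _ \<Rightarrow> 1
      | BN _ \<Rightarrow> 1
      | Val _ _ _ \<Rightarrow>
          card (nbrs (Gp_V V E col q low) (Gp_adj V E col q low) u) + 1 - 2 * card V
      | GC c \<Rightarrow> card {v \<in> V. col v = c}
      | GE P \<Rightarrow> card (Ecd E col P))"

end

theory Submission
  imports Defs
begin


lemma stage_mono: "t1 \<le> t2 \<Longrightarrow> diff_stage VV adj t Y t1 \<subseteq> diff_stage VV adj t Y t2"
proof (induction t2)
  case 0 then show ?case by simp
next
  case (Suc t2)
  have step: "diff_stage VV adj t Y t2 \<subseteq> diff_stage VV adj t Y (Suc t2)"
    by (subst diff_stage.simps(2)) (rule Un_upper1)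
  show ?case
  proof (cases "t1 = Suc t2")
    case True then show ?thesis by simp
  next
    case False then have "t1 \<le> t2" using Suc.prems by simp
    show ?thesis using Suc.IH[OF \<open>t1 \<le> t2\<close>] step by (rule order_trans)
  qed
qed

lemma stage_sub: "diff_stage VV adj t Y tau \<subseteq> VV - Y"
proof (induction tau)
  case 0 show ?case by (subst diff_stage.simps(1)) (rule Collect_restrict)
next
  case (Suc tau) show ?case
    by (subst diff_stage.simps(2)) (rule Un_least[OF Suc.IH Collect_restrict])
qed

lemma diffusion_sub: "diffusion VV adj t Y \<subseteq> VV - Y"
  unfolding diffusion_def by (rule UN_least) (rule stage_sub)

lemma dif_zero: "u \<in> VV - Y \<Longrightarrow> t u = 0 \<Longrightarrow> u \<in> diffusion VV adj t Y"
  unfolding diffusion_def by (rule UN_I[of 0]) auto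

lemma diff_fin_stage:
  assumes "finite A" "A \<subseteq> diffusion VV adj t Y"
  shows "\<exists>tau. A \<subseteq> diff_stage VV adj t Y tau"
  using assms
proof (induction A rule: finite_induct)
  case empty then show ?case by auto
next
  case (insert x F)
  then obtain t1 where t1: "F \<subseteq> diff_stage VV adj t Y t1" by auto
  from insert obtain t2 where t2: "x \<in> diff_stage VV adj t Y t2" unfolding diffusion_def by auto
  have "F \<subseteq> diff_stage VV adj t Y (max t1 t2)" using t1 stage_mono[of t1 "max t1 t2" VV adj t Y] by auto
  moreover have "x \<in> diff_stage VV adj t Y (max t1 t2)" using t2 stage_mono[of t2 "max t1 t2" VV adj t Y] by auto
  ultimately show ?case by auto
qed

lemma diff_step:
  assumes "finite VV" "u \<in> VV - Y" "A \<subseteq> nbrs VV adj u" "A \<subseteq> diffusion VV adj t Y" "t u \<le> card A"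
  shows "u \<in> diffusion VV adj t Y"
proof -
  have fn: "finite (nbrs VV adj u)" using assms(1) unfolding nbrs_def by auto
  then have "finite A" using assms(3) finite_subset by auto
  then obtain tau where tau: "A \<subseteq> diff_stage VV adj t Y tau" using diff_fin_stage assms(4) by blast
  have "card A \<le> card (nbrs VV adj u \<inter> diff_stage VV adj t Y tau)"
    by (rule card_mono) (use fn tau assms(3) in auto)
  then have "u \<in> diff_stage VV adj t Y (Suc tau)" using assms(2,5) by auto
  then show ?thesis unfolding diffusion_def by blast
qed

lemma diff_closed:
  assumes "finite VV" "\<And>u. u \<in> VV - Y - S \<Longrightarrow> card (nbrs VV adj u \<inter> S) < t u"
  shows "diffusion VV adj t Y \<subseteq> S"
proof -
  have "diff_stage VV adj t Y tau \<subseteq> S" for tau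
  proof (induction tau)
    case 0 show ?case
    proof
      fix u assume "u \<in> diff_stage VV adj t Y 0"
      then show "u \<in> S" using assms(2)[of u] by (cases "u \<in> S") auto
    qed
  next
    case (Suc tau) show ?case
    proof
      fix u assume u: "u \<in> diff_stage VV adj t Y (Suc tau)"
      show "u \<in> S"
      proof (rule ccontr)
        assume nS: "u \<notin> S"
        then have "u \<notin> diff_stage VV adj t Y tau" using Suc by auto
        then have uu: "u \<in> VV - Y" "card (nbrs VV adj u \<inter> diff_stage VV adj t Y tau) \<ge> t u" using u by auto
        have fn: "finite (nbrs VV adj u \<inter> S)" using assms(1) unfolding nbrs_def by auto
        have "card (nbrs VV adj u \<inter> diff_stage VV adj t Y tau) \<le> card (nbrs VV adj u \<inter> S)"
          by (rule card_mono[OF fn]) (use Suc in auto)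
        then show False using uu assms(2)[of u] nS by auto
      qed
    qed
  qed
  then show ?thesis unfolding diffusion_def by auto
qed



locale red =
  fixes V :: "'a set" and E :: "'a set set" and col :: "'a \<Rightarrow> nat"
    and q :: nat and low :: "'a \<Rightarrow> nat"
  assumes finV: "finite V"
    and simple: "E \<subseteq> {{u, v} | u v. u \<in> V \<and> v \<in> V \<and> u \<noteq> v}"
    and col_range: "\<forall>v\<in>V. col v \<in> {1..q}"
    and col_proper: "\<forall>u v. {u, v} \<in> E \<longrightarrow> col u \<noteq> col v"
    and low_inj: "inj_on low V"
    and low_range: "low ` V \<subseteq> {1..card V}"
begin

abbreviation "nn \<equiv> card V"
abbreviation "GV \<equiv> Gp_V V E col q low"
abbreviation "adj \<equiv> Gp_adj V E col q low"
abbreviation "th \<equiv> Gp_t V E col q low"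
abbreviation "CN \<equiv> connodes V E col q low"
abbreviation "BB \<equiv> Bnodes V E q"
abbreviation "GG \<equiv> guards E q"
abbreviation "SEL \<equiv> XV ` V \<union> XE ` E"

lemma E_elem: "e \<in> E \<Longrightarrow> \<exists>u w. e = {u,w} \<and> u \<in> V \<and> w \<in> V \<and> u \<noteq> w \<and> col u \<noteq> col w"
  using simple col_proper by blast

lemma finE: "finite E"
proof -
  have "E \<subseteq> Pow V" using simple by auto
  then show ?thesis by (rule finite_subset) (simp add: finV)
qed

lemma colpairs_eq: "colpairs q = {A. A \<subseteq> {1..q} \<and> card A = 2}"
  unfolding colpairs_def card_2_iff by (auto; blast)

lemma fin_colpairs: "finite (colpairs q)"
  unfolding colpairs_eq by (rule finite_subset[of _ "Pow {1..q}"]) auto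

lemma card_colpairs: "card (colpairs q) = q choose 2"
  unfolding colpairs_eq using n_subsets[of "{1..q}" 2] by simp

lemma E_pair: "e \<in> E \<Longrightarrow> col ` e \<in> colpairs q"
  using E_elem col_range unfolding colpairs_def by fastforce

lemma E_Ecd: "e \<in> E \<Longrightarrow> e \<in> Ecd E col (col ` e)"
  unfolding Ecd_def by auto

lemma low_bounds: "v \<in> V \<Longrightarrow> 1 \<le> low v \<and> low v \<le> nn"
  using low_range by auto

lemma high_low: "v \<in> V \<Longrightarrow> highv nn low v + low v = 2 * nn"
  using low_bounds[of v] unfolding highv_def by linarith

lemma gad_attach_cases:
  "(x, v) \<in> gad_attach V E col P c \<Longrightarrow>
    (x = XV v \<and> v \<in> V \<and> col v = c) \<or> (\<exists>e. x = XE e \<and> e \<in> Ecd E col P \<and> v \<in> e \<and> col v = c)"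
  unfolding gad_attach_def by auto

lemma Ecd_sub: "Ecd E col P \<subseteq> E" unfolding Ecd_def by auto

lemma gad_attach_V: "(x, v) \<in> gad_attach V E col P c \<Longrightarrow> v \<in> V \<and> x \<in> SEL"
  using gad_attach_cases[of x v P c] Ecd_sub E_elem by blast

lemma gad_size_le: "v \<in> V \<Longrightarrow> gad_size nn low b x v \<le> 2 * nn"
  using low_bounds[of v] unfolding gad_size_def highv_def by (auto split: node.split)

lemma CN_iff: "Conn P c b x i \<in> CN \<longleftrightarrow>
   (P, c, b) \<in> validx q \<and> (\<exists>v. (x, v) \<in> gad_attach V E col P c \<and> i < gad_size nn low b x v)"
  unfolding connodes_def by blast

lemma CN_form: "w \<in> CN \<Longrightarrow> \<exists>P c b x i. w = Conn P c b x i"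
  unfolding connodes_def by blast

lemma CN_sel: "Conn P c b x i \<in> CN \<Longrightarrow> x \<in> SEL"
  unfolding CN_iff using gad_attach_V by blast

lemma fin_validx: "finite (validx q)"
proof -
  have "validx q \<subseteq> colpairs q \<times> {1..q} \<times> UNIV"
    unfolding validx_def colpairs_def by auto
  then show ?thesis by (rule finite_subset) (simp add: fin_colpairs)
qed

lemma finCN: "finite CN"
proof -
  have "CN \<subseteq> (\<lambda>((P,c,b),x,i). Conn P c b x i) ` (validx q \<times> SEL \<times> {..<2*nn+1})"
  proof
    fix w assume "w \<in> CN"
    then obtain P c b x i v where w: "w = Conn P c b x i" "(P,c,b) \<in> validx q"
      "(x, v) \<in> gad_attach V E col P c" "i < gad_size nn low b x v"
      unfolding connodes_def by blast
    then have "v \<in> V" "x \<in> SEL" using gad_attach_V by auto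
    then have "i < 2*nn+1" using gad_size_le[of v b x] w by auto
    then show "w \<in> (\<lambda>((P,c,b),x,i). Conn P c b x i) ` (validx q \<times> SEL \<times> {..<2*nn+1})"
      using w \<open>x \<in> SEL\<close> by force
  qed
  moreover have "finite (validx q \<times> SEL \<times> {..<2*nn+1})"
    using fin_validx finV finE by auto
  ultimately show ?thesis using finite_subset finite_imageI by metis
qed

lemma finGV: "finite GV"
  unfolding Gp_V_def guards_def Bnodes_def using finV finE fin_colpairs fin_validx finCN by auto

lemma finGG: "finite GG" unfolding guards_def using fin_colpairs by auto

lemma inGV: "v \<in> V \<Longrightarrow> XV v \<in> GV" "e \<in> E \<Longrightarrow> XE e \<in> GV" "g \<in> GG \<Longrightarrow> g \<in> GV"
  "(P,c,b) \<in> validx q \<Longrightarrow> Val P c b \<in> GV" "w \<in> CN \<Longrightarrow> w \<in> GV" "w \<in> BB \<Longrightarrow> w \<in> GV"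
  unfolding Gp_V_def by force+

lemma SEL_GV: "SEL \<subseteq> GV" using inGV by auto

lemma th_simps: "th (XV v) = 0" "th (XE e) = 0" "th (Conn P c b x i) = 1" "th (BN i) = 1"
  "th (GC c) = card {v \<in> V. col v = c}" "th (GE P) = card (Ecd E col P)"
  "th (Val P c b) = card (nbrs GV adj (Val P c b)) + 1 - 2 * nn"
  unfolding Gp_t_def by simp_all

lemma adj_GC: "adj (GC c) w \<Longrightarrow> (\<exists>v. w = XV v \<and> v \<in> V \<and> col v = c) \<or> w \<in> BB"
  unfolding Gp_adj_def Gp_E_def by (auto simp: guards_def Bnodes_def dest!: CN_sel)

lemma adj_GE: "adj (GE P) w \<Longrightarrow> (\<exists>e. w = XE e \<and> e \<in> Ecd E col P) \<or> w \<in> BB"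
  unfolding Gp_adj_def Gp_E_def by (auto simp: guards_def Bnodes_def dest!: CN_sel)

lemma adj_BN: "adj (BN i) w \<Longrightarrow> w \<in> GG"
  unfolding Gp_adj_def Gp_E_def by (auto simp: guards_def Bnodes_def dest!: CN_sel)

lemma adj_Val: "adj (Val P c b) w \<Longrightarrow> w \<in> CN \<and> (\<exists>x i. w = Conn P c b x i)"
  unfolding Gp_adj_def Gp_E_def by (auto simp: guards_def Bnodes_def) (auto dest!: CN_sel)

lemma adj_Conn: "adj (Conn P c b x i) w \<Longrightarrow> w = Val P c b \<or> w = x"
proof -
  have "\<not> (\<exists>P' c' b' i'. (Conn P' c' b' (Conn P c b x i) i') \<in> CN)"
    using gad_attach_V unfolding connodes_def by blast
  then show "adj (Conn P c b x i) w \<Longrightarrow> w = Val P c b \<or> w = x"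
    unfolding Gp_adj_def Gp_E_def by (auto simp: guards_def Bnodes_def)
qed

lemma adjI_GC: "c \<in> {1..q} \<Longrightarrow> v \<in> V \<Longrightarrow> col v = c \<Longrightarrow> adj (GC c) (XV v)"
  unfolding Gp_adj_def Gp_E_def by auto

lemma adjI_GE: "P \<in> colpairs q \<Longrightarrow> e \<in> Ecd E col P \<Longrightarrow> adj (GE P) (XE e)"
  unfolding Gp_adj_def Gp_E_def by auto

lemma adjI_BN: "w \<in> BB \<Longrightarrow> g \<in> GG \<Longrightarrow> adj w g"
  unfolding Gp_adj_def Gp_E_def Bnodes_def by auto

lemma adjI_Val: "Conn P c b x i \<in> CN \<Longrightarrow> adj (Val P c b) (Conn P c b x i)"
  unfolding Gp_adj_def Gp_E_def by auto

lemma adjI_Conn: "Conn P c b x i \<in> CN \<Longrightarrow> adj (Conn P c b x i) x"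
  unfolding Gp_adj_def Gp_E_def by auto


abbreviation "DD Y \<equiv> diffusion GV adj th Y"

lemma sel_act: "x \<in> SEL \<Longrightarrow> x \<notin> Y \<Longrightarrow> x \<in> DD Y"
  using SEL_GV by (intro dif_zero) (auto simp: th_simps)

lemma conn_act: "Conn P c b x i \<in> CN \<Longrightarrow> Conn P c b x i \<notin> Y \<Longrightarrow> x \<notin> Y \<Longrightarrow> Conn P c b x i \<in> DD Y"
proof -
  assume a: "Conn P c b x i \<in> CN" "Conn P c b x i \<notin> Y" "x \<notin> Y"
  have xs: "x \<in> SEL" using CN_sel a(1) by blast
  show ?thesis
  proof (rule diff_step[OF finGV, of _ _ "{x}"])
    show "Conn P c b x i \<in> GV - Y" using a inGV by auto
    show "{x} \<subseteq> nbrs GV adj (Conn P c b x i)" using xs SEL_GV adjI_Conn[OF a(1)] unfolding nbrs_def by auto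
    show "{x} \<subseteq> DD Y" using sel_act xs a by auto
    show "th (Conn P c b x i) \<le> card {x}" by (simp add: th_simps)
  qed
qed

lemma GC_act: "c \<in> {1..q} \<Longrightarrow> GC c \<notin> Y \<Longrightarrow> XV ` {v \<in> V. col v = c} \<inter> Y = {} \<Longrightarrow> GC c \<in> DD Y"
proof -
  assume a: "c \<in> {1..q}" "GC c \<notin> Y" "XV ` {v \<in> V. col v = c} \<inter> Y = {}"
  show ?thesis
  proof (rule diff_step[OF finGV, of _ _ "XV ` {v \<in> V. col v = c}"])
    show "GC c \<in> GV - Y" using a inGV(3)[of "GC c"] by (auto simp: guards_def)
    show "XV ` {v \<in> V. col v = c} \<subseteq> nbrs GV adj (GC c)" using a inGV adjI_GC unfolding nbrs_def by auto
    show "XV ` {v \<in> V. col v = c} \<subseteq> DD Y" using sel_act a by auto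
    show "th (GC c) \<le> card (XV ` {v \<in> V. col v = c})" by (simp add: th_simps card_image inj_on_def)
  qed
qed

lemma GE_act: "P \<in> colpairs q \<Longrightarrow> GE P \<notin> Y \<Longrightarrow> XE ` Ecd E col P \<inter> Y = {} \<Longrightarrow> GE P \<in> DD Y"
proof -
  assume a: "P \<in> colpairs q" "GE P \<notin> Y" "XE ` Ecd E col P \<inter> Y = {}"
  show ?thesis
  proof (rule diff_step[OF finGV, of _ _ "XE ` Ecd E col P"])
    show "GE P \<in> GV - Y" using a inGV(3)[of "GE P"] by (auto simp: guards_def)
    show "XE ` Ecd E col P \<subseteq> nbrs GV adj (GE P)" using a inGV(2) adjI_GE unfolding nbrs_def by (auto dest: subsetD[OF Ecd_sub])
    show "XE ` Ecd E col P \<subseteq> DD Y"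
    proof
      fix x assume "x \<in> XE ` Ecd E col P"
      then obtain e where "x = XE e" "e \<in> Ecd E col P" by auto
      then have "e \<in> E" using Ecd_sub[of P] by blast
      moreover have "x \<notin> Y" using a \<open>x \<in> XE ` Ecd E col P\<close> by blast
      ultimately show "x \<in> DD Y" using sel_act[of x Y] \<open>x = XE e\<close> by simp
    qed
    show "th (GE P) \<le> card (XE ` Ecd E col P)" by (simp add: th_simps card_image inj_on_def)
  qed
qed

lemma B_act: "w \<in> BB \<Longrightarrow> w \<notin> Y \<Longrightarrow> g \<in> GG \<Longrightarrow> g \<in> DD Y \<Longrightarrow> w \<in> DD Y"
proof -
  assume a: "w \<in> BB" "w \<notin> Y" "g \<in> GG" "g \<in> DD Y"
  have "BN_i": "\<exists>i. w = BN i" using a(1) unfolding Bnodes_def by auto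
  show ?thesis
  proof (rule diff_step[OF finGV, of _ _ "{g}"])
    show "w \<in> GV - Y" using a inGV by auto
    show "{g} \<subseteq> nbrs GV adj w" using a inGV adjI_BN unfolding nbrs_def by auto
    show "{g} \<subseteq> DD Y" using a by auto
    show "th w \<le> card {g}" using BN_i by (auto simp: th_simps)
  qed
qed

definition Cn :: "'a node \<Rightarrow> 'a node set" where
  "Cn x = {w \<in> CN. \<exists>P c b i. w = Conn P c b x i}"

lemma validx_iff: "(P, c, b) \<in> validx q \<longleftrightarrow> P \<in> colpairs q \<and> c \<in> P"
  unfolding validx_def by auto

lemma gad_XV: "(XV v, v') \<in> gad_attach V E col P c \<longleftrightarrow> v' = v \<and> v \<in> V \<and> col v = c"
  unfolding gad_attach_def by auto

lemma gad_XE: "(XE e, v) \<in> gad_attach V E col P c \<longleftrightarrow> e \<in> Ecd E col P \<and> v \<in> e \<and> col v = c"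
  unfolding gad_attach_def by auto

lemma CN_XV: "Conn P c b (XV v) i \<in> CN \<longleftrightarrow>
   P \<in> colpairs q \<and> c \<in> P \<and> v \<in> V \<and> col v = c \<and> i < (if b then highv nn low v else low v)"
  unfolding CN_iff validx_iff gad_XV gad_size_def by auto

lemma CN_XE: "Conn P c b (XE e) i \<in> CN \<longleftrightarrow>
   P \<in> colpairs q \<and> c \<in> P \<and> e \<in> Ecd E col P \<and> (\<exists>v\<in>e. col v = c \<and> i < (if b then low v else highv nn low v))"
  unfolding CN_iff validx_iff gad_XE gad_size_def by auto

lemma colpairs_mem: "c \<in> {1..q} \<Longrightarrow> d \<in> {1..q} \<Longrightarrow> c \<noteq> d \<Longrightarrow> {c, d} \<in> colpairs q"
  unfolding colpairs_def by blast

lemma card_pairs_with: "c \<in> {1..q} \<Longrightarrow> card {P \<in> colpairs q. c \<in> P} = q - 1"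
proof -
  assume c: "c \<in> {1..q}"
  have "{P \<in> colpairs q. c \<in> P} = (\<lambda>d. {c, d}) ` ({1..q} - {c})"
  proof
    show "{P \<in> colpairs q. c \<in> P} \<subseteq> (\<lambda>d. {c, d}) ` ({1..q} - {c})"
    proof
      fix P assume "P \<in> {P \<in> colpairs q. c \<in> P}"
      then obtain c' d' where P: "P = {c', d'}" "c' \<in> {1..q}" "d' \<in> {1..q}" "c' \<noteq> d'" "c \<in> P"
        unfolding colpairs_def by blast
      show "P \<in> (\<lambda>d. {c, d}) ` ({1..q} - {c})"
      proof (cases "c = c'")
        case True then show ?thesis using P by blast
      next
        case False then have "c = d'" using P by blast
        then have "P = {c, c'}" "c' \<in> {1..q} - {c}" using P by auto
        then show ?thesis by blast
      qed
    qed
    show "(\<lambda>d. {c, d}) ` ({1..q} - {c}) \<subseteq> {P \<in> colpairs q. c \<in> P}"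
    proof
      fix P assume "P \<in> (\<lambda>d. {c, d}) ` ({1..q} - {c})"
      then obtain d where d0: "d \<in> {1..q} - {c}" "P = {c, d}" by blast
      then have d: "P = {c, d}" "d \<in> {1..q}" "d \<noteq> c" by auto
      then have "P \<in> colpairs q" using colpairs_mem[of c d] c by auto
      then show "P \<in> {P \<in> colpairs q. c \<in> P}" using d by auto
    qed
  qed
  moreover have "inj_on (\<lambda>d. {c, d}) ({1..q} - {c})"
    unfolding inj_on_def by (auto simp: doubleton_eq_iff)
  ultimately show ?thesis using c by (simp add: card_image)
qed

lemma card_Cn_XV: "v \<in> V \<Longrightarrow> card (Cn (XV v)) = 2 * nn * (q - 1)"
proof -
  assume v: "v \<in> V"
  let ?sz = "\<lambda>b. if b then highv nn low v else low v"
  let ?PP = "{P \<in> colpairs q. col v \<in> P}"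
  have eq: "Cn (XV v) = (\<lambda>(P, b, i). Conn P (col v) b (XV v) i) ` (SIGMA P:?PP. SIGMA b:UNIV. {..< ?sz b})"
  proof
    show "Cn (XV v) \<subseteq> (\<lambda>(P, b, i). Conn P (col v) b (XV v) i) ` (SIGMA P:?PP. SIGMA b:UNIV. {..< ?sz b})"
    proof
      fix w assume "w \<in> Cn (XV v)"
      then obtain P c b i where w: "w = Conn P c b (XV v) i" "w \<in> CN" unfolding Cn_def by auto
      then have "Conn P c b (XV v) i \<in> CN" by simp
      then have "P \<in> colpairs q \<and> c \<in> P \<and> v \<in> V \<and> col v = c \<and> i < ?sz b" unfolding CN_XV by simp
      then show "w \<in> (\<lambda>(P, b, i). Conn P (col v) b (XV v) i) ` (SIGMA P:?PP. SIGMA b:UNIV. {..< ?sz b})"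
        using w by (auto intro!: image_eqI[of _ _ "(P, b, i)"])
    qed
    show "(\<lambda>(P, b, i). Conn P (col v) b (XV v) i) ` (SIGMA P:?PP. SIGMA b:UNIV. {..< ?sz b}) \<subseteq> Cn (XV v)"
      using v by (auto simp: Cn_def CN_XV)
  qed
  have inj: "inj_on (\<lambda>(P, b, i). Conn P (col v) b (XV v) i) (SIGMA P:?PP. SIGMA b:UNIV. {..< ?sz b})"
    unfolding inj_on_def by auto
  have "card (SIGMA P:?PP. SIGMA b:UNIV. {..< ?sz b}) = (\<Sum>P\<in>?PP. \<Sum>b\<in>UNIV. ?sz b)"
    using fin_colpairs by (simp add: card_SigmaI)
  also have "\<dots> = (\<Sum>P\<in>?PP. 2 * nn)"
    using high_low[OF v] by (simp add: UNIV_bool add.commute)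
  also have "\<dots> = (q - 1) * (2 * nn)"
  proof -
    have "col v \<in> {1..q}" using col_range v by blast
    then have "card ?PP = q - 1" by (rule card_pairs_with)
    then show ?thesis by simp
  qed
  finally have "card (SIGMA P:?PP. SIGMA b:UNIV. {..< ?sz b}) = 2 * nn * (q - 1)" by simp
  then show ?thesis using eq card_image[OF inj] by simp
qed

lemma card_Cn_XE: "e \<in> E \<Longrightarrow> card (Cn (XE e)) = 4 * nn"
proof -
  assume e: "e \<in> E"
  obtain u w where uw: "e = {u,w}" "u \<in> V" "w \<in> V" "u \<noteq> w" "col u \<noteq> col w" using E_elem[OF e] by blast
  let ?sz = "\<lambda>v b. if b then low v else highv nn low v"
  have eq: "Cn (XE e) = (\<lambda>(v, b, i). Conn (col ` e) (col v) b (XE e) i) ` (SIGMA v:e. SIGMA b:UNIV. {..< ?sz v b})"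
  proof
    show "Cn (XE e) \<subseteq> (\<lambda>(v, b, i). Conn (col ` e) (col v) b (XE e) i) ` (SIGMA v:e. SIGMA b:UNIV. {..< ?sz v b})"
    proof
      fix x assume "x \<in> Cn (XE e)"
      then obtain P c b i where x: "x = Conn P c b (XE e) i" "x \<in> CN" unfolding Cn_def by auto
      then have "Conn P c b (XE e) i \<in> CN" by simp
      then obtain v where v: "v \<in> e" "col v = c" "i < ?sz v b" "e \<in> Ecd E col P" unfolding CN_XE by auto
      then have "P = col ` e" unfolding Ecd_def by auto
      then show "x \<in> (\<lambda>(v, b, i). Conn (col ` e) (col v) b (XE e) i) ` (SIGMA v:e. SIGMA b:UNIV. {..< ?sz v b})"
        using x v by (auto intro!: image_eqI[of _ _ "(v, b, i)"])
    qed
    show "(\<lambda>(v, b, i). Conn (col ` e) (col v) b (XE e) i) ` (SIGMA v:e. SIGMA b:UNIV. {..< ?sz v b}) \<subseteq> Cn (XE e)"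
    proof
      fix z assume "z \<in> (\<lambda>(v, b, i). Conn (col ` e) (col v) b (XE e) i) ` (SIGMA v:e. SIGMA b:UNIV. {..< ?sz v b})"
      then obtain v b i where z: "z = Conn (col ` e) (col v) b (XE e) i" "v \<in> e" "i < ?sz v b" by auto
      have "Conn (col ` e) (col v) b (XE e) i \<in> CN" unfolding CN_XE
        using E_pair[OF e] E_Ecd[OF e] z by (intro conjI bexI[of _ v]) auto
      then show "z \<in> Cn (XE e)" unfolding Cn_def using z by auto
    qed
  qed
  have inj: "inj_on (\<lambda>(v, b, i). Conn (col ` e) (col v) b (XE e) i) (SIGMA v:e. SIGMA b:UNIV. {..< ?sz v b})"
    using uw unfolding inj_on_def by auto
  have "card (SIGMA v:e. SIGMA b:UNIV. {..< ?sz v b}) = (\<Sum>v\<in>e. \<Sum>b\<in>UNIV. ?sz v b)"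
    using uw by (simp add: card_SigmaI)
  also have "\<dots> = (\<Sum>v\<in>e. 2 * nn)"
    using high_low uw by (simp add: UNIV_bool add.commute)
  also have "\<dots> = 4 * nn"
    using uw by simp
  finally show ?thesis using eq card_image[OF inj] by simp
qed

lemma finCn: "finite (Cn x)" unfolding Cn_def using finCN by auto

definition AS :: "'a set \<Rightarrow> 'a set set \<Rightarrow> 'a node set" where
  "AS A F = XV ` (V - A) \<union> XE ` (E - F)"

definition SS :: "'a set \<Rightarrow> 'a set set \<Rightarrow> 'a node set" where
  "SS A F = AS A F \<union> \<Union> (Cn ` AS A F)"

lemma SS_elems: "w \<in> SS A F \<Longrightarrow> w \<in> AS A F \<or> (\<exists>P c b x i. w = Conn P c b x i \<and> x \<in> AS A F \<and> w \<in> CN)"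
  unfolding SS_def Cn_def by auto

lemma card_SS:
  assumes "A \<subseteq> V" "F \<subseteq> E"
  shows "card (SS A F) = card (V - A) * (2 * nn * (q - 1) + 1) + card (E - F) * (4 * nn + 1)"
proof -
  have finAS: "finite (AS A F)" unfolding AS_def using finV finE by auto
  have SSeq: "SS A F = (\<Union>x\<in>AS A F. insert x (Cn x))" unfolding SS_def by auto
  have "card (SS A F) = (\<Sum>x\<in>AS A F. card (insert x (Cn x)))"
    unfolding SSeq
  proof (rule card_UN_disjoint[OF finAS])
    show "\<forall>x\<in>AS A F. finite (insert x (Cn x))" using finCn by auto
    show "\<forall>x\<in>AS A F. \<forall>y\<in>AS A F. x \<noteq> y \<longrightarrow> insert x (Cn x) \<inter> insert y (Cn y) = {}"
      unfolding AS_def Cn_def by auto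
  qed
  also have "\<dots> = (\<Sum>x\<in>AS A F. Suc (card (Cn x)))"
  proof (rule sum.cong[OF refl])
    fix x assume "x \<in> AS A F"
    then have "x \<notin> Cn x" unfolding AS_def Cn_def by auto
    then show "card (insert x (Cn x)) = Suc (card (Cn x))" using finCn by simp
  qed
  also have "\<dots> = (\<Sum>x\<in>XV ` (V - A). Suc (card (Cn x))) + (\<Sum>x\<in>XE ` (E - F). Suc (card (Cn x)))"
    unfolding AS_def by (rule sum.union_disjoint) (use finV finE in auto)
  also have "(\<Sum>x\<in>XV ` (V - A). Suc (card (Cn x))) = (\<Sum>v\<in>V - A. Suc (card (Cn (XV v))))"
    by (rule sum.reindex_cong[of XV]) (auto simp: inj_on_def)
  also have "\<dots> = (\<Sum>v\<in>V - A. 2 * nn * (q - 1) + 1)"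
    by (rule sum.cong) (auto simp: card_Cn_XV)
  also have "(\<Sum>x\<in>XE ` (E - F). Suc (card (Cn x))) = (\<Sum>e\<in>E - F. Suc (card (Cn (XE e))))"
    by (rule sum.reindex_cong[of XE]) (auto simp: inj_on_def)
  also have "\<dots> = (\<Sum>e\<in>E - F. 4 * nn + 1)"
    by (rule sum.cong) (auto simp: card_Cn_XE)
  finally show ?thesis by (simp add: mult.commute)
qed

lemma SS_lower: "AS A F \<inter> Y = {} \<Longrightarrow> Y \<inter> CN = {} \<Longrightarrow> SS A F \<subseteq> DD Y"
proof
  fix w assume a: "AS A F \<inter> Y = {}" "Y \<inter> CN = {}" "w \<in> SS A F"
  have ASs: "AS A F \<subseteq> SEL" unfolding AS_def by (intro Un_mono image_mono) auto
  from SS_elems[OF a(3)] show "w \<in> DD Y"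
  proof
    assume wa: "w \<in> AS A F"
    then have "w \<in> SEL" using ASs by blast
    moreover have "w \<notin> Y" using a(1) wa by blast
    ultimately show ?thesis by (rule sel_act)
  next
    assume "\<exists>P c b x i. w = Conn P c b x i \<and> x \<in> AS A F \<and> w \<in> CN"
    then obtain P c b x i where w: "w = Conn P c b x i" "x \<in> AS A F" "w \<in> CN" by blast
    have "w \<notin> Y" using a(2) w(3) by blast
    moreover have "x \<notin> Y" using a(1) w(2) by blast
    ultimately show ?thesis using conn_act[of P c b x i Y] w by simp
  qed
qed


lemma SS_not: "GC c \<notin> SS A F" "GE P \<notin> SS A F" "Val P c b \<notin> SS A F" "BN i \<notin> SS A F"
  "Conn P c b x i \<in> SS A F \<Longrightarrow> x \<in> AS A F" "XV v \<in> SS A F \<Longrightarrow> XV v \<in> AS A F"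
  "XE e \<in> SS A F \<Longrightarrow> XE e \<in> AS A F"
  by (auto simp: SS_def AS_def Cn_def)

lemma AS_XV: "XV v \<in> AS A F \<longleftrightarrow> v \<in> V - A" unfolding AS_def by auto
lemma AS_XE: "XE e \<in> AS A F \<longleftrightarrow> e \<in> E - F" unfolding AS_def by auto

lemma Cn_SS: "x \<in> AS A F \<Longrightarrow> Conn P c b x i \<in> CN \<Longrightarrow> Conn P c b x i \<in> SS A F"
  unfolding SS_def Cn_def by auto

lemma V_empty_q0: "q = 0 \<Longrightarrow> V = {}" using col_range by auto

lemma X_int: "int (2*nn*(q-1)+1) = 2*int nn*int q - 2*int nn + 1"
proof (cases "q = 0")
  case True then show ?thesis using V_empty_q0 by simp
next
  case False then obtain r where "q = Suc r" using not0_implies_Suc by blast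
  then show ?thesis by (simp add: algebra_simps)
qed

lemma card_SS_int:
  assumes "A \<subseteq> V" "F \<subseteq> E"
  shows "int (card (SS A F)) = (int nn - int (card A)) * (2*int nn*int q - 2*int nn + 1)
           + (int (card E) - int (card F)) * (4*int nn+1)"
proof -
  have fA: "finite A" using assms(1) finV by (rule finite_subset)
  have fF: "finite F" using assms(2) finE by (rule finite_subset)
  have a1: "card A \<le> nn" using assms finV card_mono by blast
  have a2: "card F \<le> card E" using assms finE card_mono by blast
  have c1: "int (card (V - A)) = int nn - int (card A)"
    using card_Diff_subset[OF fA assms(1)] a1 by (simp add: of_nat_diff)
  have c2: "int (card (E - F)) = int (card E) - int (card F)"
    using card_Diff_subset[OF fF assms(2)] a2 by (simp add: of_nat_diff)
  have "int (card (SS A F)) = int (card (V - A)) * int (2 * nn * (q - 1) + 1) + int (card (E - F)) * int (4 * nn + 1)"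
    by (simp only: card_SS[OF assms] of_nat_add of_nat_mult)
  also have "\<dots> = (int nn - int (card A)) * (2*int nn*int q - 2*int nn + 1)
           + (int (card E) - int (card F)) * (4*int nn+1)"
    unfolding c1 c2 X_int by simp
  finally show ?thesis .
qed

lemma SS_GV: "SS A F \<subseteq> GV"
proof
  fix w assume "w \<in> SS A F"
  then have "w \<in> AS A F \<or> (\<exists>P c b x i. w = Conn P c b x i \<and> x \<in> AS A F \<and> w \<in> CN)" by (rule SS_elems)
  then show "w \<in> GV"
  proof
    assume "w \<in> AS A F" then show ?thesis unfolding AS_def using inGV(1,2) by auto
  next
    assume "\<exists>P c b x i. w = Conn P c b x i \<and> x \<in> AS A F \<and> w \<in> CN"
    then show ?thesis using inGV(5) by auto
  qed
qed

lemma forward: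
  assumes K: "K \<subseteq> V" "card K = q" "is_clique E K"
  shows "\<exists>Y \<subseteq> GV. card Y \<le> lval q \<and> int (card (DD Y)) \<le> kval V E q"
proof -
  have finK: "finite K" using K(1) finV by (rule finite_subset)
  have injK: "inj_on col K"
  proof (rule inj_onI, rule ccontr)
    fix u w assume "u \<in> K" "w \<in> K" "col u = col w" "u \<noteq> w"
    then have "{u, w} \<in> E" using K(3) unfolding is_clique_def by auto
    then show False using col_proper \<open>col u = col w\<close> by blast
  qed
  have colK: "col ` K = {1..q}"
  proof (rule card_subset_eq)
    show "col ` K \<subseteq> {1..q}" using K col_range by auto
    show "card (col ` K) = card {1..q}" using card_image[OF injK] K by simp
  qed simp
  have vc: "\<And>c. c \<in> {1..q} \<Longrightarrow> \<exists>v\<in>K. col v = c" using colK by (metis imageE)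
  define FK where "FK = {B. B \<subseteq> K \<and> card B = 2}"
  have FKE: "FK \<subseteq> E"
  proof
    fix B assume "B \<in> FK"
    then obtain x y where "B = {x, y}" "x \<noteq> y" "x \<in> K" "y \<in> K" unfolding FK_def card_2_iff by auto
    then show "B \<in> E" using K(3) unfolding is_clique_def by auto
  qed
  have finFK: "finite FK" using FKE finE by (rule finite_subset)
  have pairK: "\<And>x y. x \<in> K \<Longrightarrow> y \<in> K \<Longrightarrow> x \<noteq> y \<Longrightarrow> {x, y} \<in> FK" unfolding FK_def by auto
  have cardFK: "card FK = q choose 2" unfolding FK_def using n_subsets[OF finK, of 2] K(2) by simp
  define Y where "Y = XV ` K \<union> XE ` FK"
  have YGV: "Y \<subseteq> GV" using inGV K FKE unfolding Y_def by auto
  have cardY: "card Y \<le> lval q"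
  proof -
    have "card Y \<le> card (XV ` K) + card (XE ` FK)" unfolding Y_def by (rule card_Un_le)
    also have "\<dots> \<le> card K + card FK" using finFK finK by (intro add_mono card_image_le)
    finally show ?thesis using K(2) cardFK unfolding lval_def by simp
  qed
  have closed: "DD Y \<subseteq> SS K FK"
  proof (rule diff_closed[OF finGV])
    fix u assume u: "u \<in> GV - Y - SS K FK"
    have finN: "finite (nbrs GV adj u)" using finGV unfolding nbrs_def by auto
    have "u \<in> XV ` V \<or> u \<in> XE ` E \<or> u \<in> GG \<or> u \<in> (\<lambda>(P, c, b). Val P c b) ` validx q \<or> u \<in> CN \<or> u \<in> BB"
      using u unfolding Gp_V_def by blast
    then show "card (nbrs GV adj u \<inter> SS K FK) < th u"
    proof (elim disjE)
      assume "u \<in> XV ` V"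
      then obtain v where "u = XV v" "v \<in> V" by auto
      then show ?thesis using u unfolding Y_def SS_def AS_def by auto
    next
      assume "u \<in> XE ` E"
      then obtain e where "u = XE e" "e \<in> E" by auto
      then show ?thesis using u unfolding Y_def SS_def AS_def by auto
    next
      assume "u \<in> GG"
      then have "(\<exists>c\<in>{1..q}. u = GC c) \<or> (\<exists>P\<in>colpairs q. u = GE P)" unfolding guards_def by auto
      then show ?thesis
      proof (elim disjE bexE)
        fix c assume c: "c \<in> {1..q}" "u = GC c"
        obtain v where v: "v \<in> K" "col v = c" using vc[OF c(1)] by auto
        have fc: "finite {v \<in> V. col v = c}" using finV by auto
        have "nbrs GV adj u \<inter> SS K FK \<subseteq> XV ` ({v \<in> V. col v = c} - K)"
        proof
          fix w assume w: "w \<in> nbrs GV adj u \<inter> SS K FK"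
          then have "adj (GC c) w" using c unfolding nbrs_def by auto
          then have "(\<exists>v. w = XV v \<and> v \<in> V \<and> col v = c) \<or> w \<in> BB" by (rule adj_GC)
          then show "w \<in> XV ` ({v \<in> V. col v = c} - K)"
          proof (elim disjE exE conjE)
            fix v' assume v': "w = XV v'" "v' \<in> V" "col v' = c"
            then have "XV v' \<in> AS K FK" using w SS_not(6)[of v' K FK] by simp
            then show ?thesis using v' AS_XV by auto
          next
            assume "w \<in> BB"
            then obtain j where "w = BN j" unfolding Bnodes_def by auto
            then show ?thesis using w SS_not(4)[of j K FK] by simp
          qed
        qed
        then have "card (nbrs GV adj u \<inter> SS K FK) \<le> card (XV ` ({v \<in> V. col v = c} - K))"
          by (intro card_mono) (use fc in auto)
        also have "\<dots> \<le> card ({v \<in> V. col v = c} - K)" by (rule card_image_le) (use fc in auto)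
        also have "\<dots> < card {v \<in> V. col v = c}"
          by (rule psubset_card_mono[OF fc]) (use v K in auto)
        finally show ?thesis using c by (simp add: th_simps)
      next
        fix P assume P: "P \<in> colpairs q" "u = GE P"
        then obtain c d where cd: "P = {c, d}" "c \<in> {1..q}" "d \<in> {1..q}" "c \<noteq> d"
          unfolding colpairs_def by auto
        obtain x where x: "x \<in> K" "col x = c" using vc[OF cd(2)] by auto
        obtain y where y: "y \<in> K" "col y = d" using vc[OF cd(3)] by auto
        have xy: "x \<noteq> y" using x y cd by auto
        have eF: "{x, y} \<in> FK" using pairK x y xy by auto
        have eP: "{x, y} \<in> Ecd E col P" using eF FKE x y cd unfolding Ecd_def by auto
        have fc: "finite (Ecd E col P)" using Ecd_sub finE by (rule finite_subset)
        have "nbrs GV adj u \<inter> SS K FK \<subseteq> XE ` (Ecd E col P - FK)"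
        proof
          fix w assume w: "w \<in> nbrs GV adj u \<inter> SS K FK"
          then have "adj (GE P) w" using P unfolding nbrs_def by auto
          then have "(\<exists>e. w = XE e \<and> e \<in> Ecd E col P) \<or> w \<in> BB" by (rule adj_GE)
          then show "w \<in> XE ` (Ecd E col P - FK)"
          proof (elim disjE exE conjE)
            fix e' assume e': "w = XE e'" "e' \<in> Ecd E col P"
            then have "XE e' \<in> AS K FK" using w SS_not(7)[of e' K FK] by simp
            then show ?thesis using e' AS_XE by auto
          next
            assume "w \<in> BB"
            then obtain j where "w = BN j" unfolding Bnodes_def by auto
            then show ?thesis using w SS_not(4)[of j K FK] by simp
          qed
        qed
        then have "card (nbrs GV adj u \<inter> SS K FK) \<le> card (XE ` (Ecd E col P - FK))"
          by (intro card_mono) (use fc in auto)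
        also have "\<dots> \<le> card (Ecd E col P - FK)" by (rule card_image_le) (use fc in auto)
        also have "\<dots> < card (Ecd E col P)"
          by (rule psubset_card_mono[OF fc]) (use eP eF in auto)
        finally show ?thesis using P by (simp add: th_simps)
      qed
    next
      assume "u \<in> (\<lambda>(P, c, b). Val P c b) ` validx q"
      then obtain P c b where Pcb0: "u = Val P c b" "(P, c, b) \<in> validx q" by auto
      then have Pcb: "u = Val P c b" "P \<in> colpairs q" "c \<in> P" unfolding validx_iff by auto
      then obtain c' d' where "P = {c', d'}" "c' \<in> {1..q}" "d' \<in> {1..q}" "c' \<noteq> d'"
        unfolding colpairs_def by auto
      then obtain d where cd: "P = {c, d}" "c \<in> {1..q}" "d \<in> {1..q}" "c \<noteq> d" using Pcb by auto
      obtain x where x: "x \<in> K" "col x = c" using vc[OF cd(2)] by auto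
      obtain y where y: "y \<in> K" "col y = d" using vc[OF cd(3)] by auto
      have xV: "x \<in> V" using x K by auto
      have xy: "x \<noteq> y" using x y cd by auto
      have eF: "{x, y} \<in> FK" using pairK x y xy by auto
      have eP: "{x, y} \<in> Ecd E col P" using eF FKE x y cd unfolding Ecd_def by auto
      define s1 where "s1 = (if b then highv nn low x else low x)"
      define s2 where "s2 = (if b then low x else highv nn low x)"
      have s12: "s1 + s2 = 2 * nn" using high_low[OF xV] unfolding s1_def s2_def by auto
      define R1 where "R1 = (\<lambda>i. Conn P c b (XV x) i) ` {..<s1}"
      define R2 where "R2 = (\<lambda>i. Conn P c b (XE {x, y}) i) ` {..<s2}"
      have R1N: "R1 \<subseteq> nbrs GV adj u"
      proof
        fix w assume "w \<in> R1"
        then obtain i where i: "w = Conn P c b (XV x) i" "i < s1" unfolding R1_def by auto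
        have "Conn P c b (XV x) i \<in> CN" unfolding CN_XV using Pcb xV x s1_def i by auto
        then have "w \<in> CN" using i by simp
        then show "w \<in> nbrs GV adj u" using i inGV adjI_Val Pcb unfolding nbrs_def by auto
      qed
      have R2N: "R2 \<subseteq> nbrs GV adj u"
      proof
        fix w assume "w \<in> R2"
        then obtain i where i: "w = Conn P c b (XE {x, y}) i" "i < s2" unfolding R2_def by auto
        have "Conn P c b (XE {x, y}) i \<in> CN" unfolding CN_XE
          using Pcb eP x s2_def i by (intro conjI bexI[of _ x]) auto
        then have "w \<in> CN" using i by simp
        then show "w \<in> nbrs GV adj u" using i inGV adjI_Val Pcb unfolding nbrs_def by auto
      qed
      have cR: "card (R1 \<union> R2) = 2 * nn"
      proof -
        have "card R1 = s1" unfolding R1_def by (subst card_image) (auto simp: inj_on_def)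
        moreover have "card R2 = s2" unfolding R2_def by (subst card_image) (auto simp: inj_on_def)
        moreover have "R1 \<inter> R2 = {}" unfolding R1_def R2_def by auto
        ultimately show ?thesis using s12 card_Un_disjoint[of R1 R2] unfolding R1_def R2_def by auto
      qed
      have n1: "Conn P c b (XV x) i \<notin> SS K FK" for i
      proof
        assume "Conn P c b (XV x) i \<in> SS K FK"
        then have "XV x \<in> AS K FK" by (rule SS_not(5))
        then show False using AS_XV x by simp
      qed
      have n2: "Conn P c b (XE {x, y}) i \<notin> SS K FK" for i
      proof
        assume "Conn P c b (XE {x, y}) i \<in> SS K FK"
        then have "XE {x, y} \<in> AS K FK" by (rule SS_not(5))
        then show False using AS_XE eF by simp
      qed
      have disj: "SS K FK \<inter> (R1 \<union> R2) = {}"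
        unfolding R1_def R2_def using n1 n2 by auto
      have RN: "R1 \<union> R2 \<subseteq> nbrs GV adj u" using R1N R2N by blast
      have finR: "finite (R1 \<union> R2)" using RN finN by (rule finite_subset)
      have "nbrs GV adj u \<inter> SS K FK \<subseteq> nbrs GV adj u - (R1 \<union> R2)" using disj by auto
      then have "card (nbrs GV adj u \<inter> SS K FK) \<le> card (nbrs GV adj u - (R1 \<union> R2))"
        by (intro card_mono) (use finN in auto)
      also have "\<dots> = card (nbrs GV adj u) - 2 * nn"
        using card_Diff_subset[OF finR RN] cR by simp
      finally have le: "card (nbrs GV adj u \<inter> SS K FK) \<le> card (nbrs GV adj u) - 2 * nn" .
      have h1: "2 * nn \<le> card (nbrs GV adj u)" using cR card_mono[OF finN RN] by simp
      have th: "th u = card (nbrs GV adj u) + 1 - 2 * nn" using Pcb(1) th_simps(7)[of P c b] by simp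
      have eq: "card (nbrs GV adj u) + 1 - 2 * nn = Suc (card (nbrs GV adj u) - 2 * nn)"
        using h1 by (simp add: Suc_diff_le)
      from le have "card (nbrs GV adj u \<inter> SS K FK) < Suc (card (nbrs GV adj u) - 2 * nn)"
        by (rule le_imp_less_Suc)
      also have "Suc (card (nbrs GV adj u) - 2 * nn) = th u" by (simp only: th eq)
      finally show ?thesis .
    next
      assume uCN: "u \<in> CN"
      have "\<exists>P c b x i. u = Conn P c b x i" using CN_form[OF uCN] .
      then obtain P c b x i where ux1: "u = Conn P c b x i" by blast
      have ux: "u = Conn P c b x i" "u \<in> CN" using ux1 uCN by auto
      have xAS: "x \<notin> AS K FK" using Cn_SS u ux by auto
      have xsel: "x \<in> SEL" using CN_sel ux by auto
      have "nbrs GV adj u \<inter> SS K FK = {}"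
      proof (rule ccontr)
        assume "nbrs GV adj u \<inter> SS K FK \<noteq> {}"
        then obtain w where w: "adj u w" "w \<in> SS K FK" unfolding nbrs_def by auto
        then have "w = Val P c b \<or> w = x" using adj_Conn ux by auto
        then show False
        proof
          assume "w = Val P c b" then show False using w(2) SS_not(3) by simp
        next
          assume "w = x"
          then have "x \<in> SS K FK" using w(2) by simp
          then show False using xAS xsel SS_not(6,7) by auto
        qed
      qed
      then show ?thesis using ux by (simp add: th_simps)
    next
      assume "u \<in> BB"
      then obtain i where ui: "u = BN i" unfolding Bnodes_def by auto
      have "nbrs GV adj u \<inter> SS K FK = {}"
      proof (rule ccontr)
        assume "nbrs GV adj u \<inter> SS K FK \<noteq> {}"
        then obtain w where w: "adj u w" "w \<in> SS K FK" unfolding nbrs_def by auto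
        then have "w \<in> GG" using adj_BN ui by auto
        then show False using w(2) SS_not(1,2) unfolding guards_def by auto
      qed
      then show ?thesis using ui by (simp add: th_simps)
    qed
  qed
  have finSS: "finite (SS K FK)" using SS_GV finGV by (rule finite_subset)
  have "card (DD Y) \<le> card (SS K FK)" using card_mono[OF finSS closed] .
  then have "int (card (DD Y)) \<le> int (card (SS K FK))" by simp
  also have "\<dots> = kval V E q"
    using card_SS_int[OF K(1) FKE] K(2) cardFK unfolding kval_def by simp
  finally show ?thesis using YGV cardY by blast
qed


definition gs :: "'a node \<Rightarrow> 'a node set" where
  "gs g = (case g of GC c \<Rightarrow> insert (GC c) (XV ` {v \<in> V. col v = c})
                   | GE P \<Rightarrow> insert (GE P) (XE ` Ecd E col P) | _ \<Rightarrow> {})"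

lemma gs_GC: "gs (GC c) = insert (GC c) (XV ` {v \<in> V. col v = c})" unfolding gs_def by simp
lemma gs_GE: "gs (GE P) = insert (GE P) (XE ` Ecd E col P)" unfolding gs_def by simp

lemma card_GG: "card GG = lval q"
proof -
  have "card GG = card (GC ` {1..q} :: 'a node set) + card (GE ` colpairs q :: 'a node set)"
    unfolding guards_def by (rule card_Un_disjoint) (auto simp: fin_colpairs)
  also have "\<dots> = q + (q choose 2)"
    by (simp add: card_image inj_on_def card_colpairs del: One_nat_def)
  finally show ?thesis unfolding lval_def .
qed

lemma GG_cases: "g \<in> GG \<Longrightarrow> (\<exists>c. c \<in> {1..q} \<and> g = GC c) \<or> (\<exists>P. P \<in> colpairs q \<and> g = GE P)"
  unfolding guards_def by auto

lemma gs_fin: "finite (gs g)"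
proof -
  have "finite (Ecd E col P)" for P using Ecd_sub finE by (rule finite_subset)
  then show ?thesis unfolding gs_def using finV by (auto split: node.split)
qed

lemma gs_self: "g \<in> GG \<Longrightarrow> g \<in> gs g"
  using GG_cases[of g] by (auto simp: gs_GC gs_GE)

lemma gs_sub: "g \<in> GG \<Longrightarrow> gs g \<subseteq> GG \<union> SEL"
proof -
  assume g: "g \<in> GG"
  from GG_cases[OF g] show ?thesis
  proof (elim disjE exE conjE)
    fix c assume "c \<in> {1..q}" "g = GC c" then show ?thesis using g by (auto simp: gs_GC)
  next
    fix P assume "P \<in> colpairs q" "g = GE P"
    then show ?thesis using g Ecd_sub by (auto simp: gs_GE)
  qed
qed

lemma gs_disj: "g \<in> GG \<Longrightarrow> g' \<in> GG \<Longrightarrow> g \<noteq> g' \<Longrightarrow> gs g \<inter> gs g' = {}"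
proof -
  assume g: "g \<in> GG" "g' \<in> GG" "g \<noteq> g'"
  from GG_cases[OF g(1)] GG_cases[OF g(2)] show ?thesis
  proof (elim disjE exE conjE)
    fix c c' assume "g = GC c" "g' = GC c'" then show ?thesis using g(3) by (auto simp: gs_GC)
  next
    fix c P' assume "g = GC c" "g' = GE P'" then show ?thesis by (auto simp: gs_GC gs_GE)
  next
    fix P c' assume "g = GE P" "g' = GC c'" then show ?thesis by (auto simp: gs_GC gs_GE)
  next
    fix P P' assume "g = GE P" "g' = GE P'" then show ?thesis using g(3) by (auto simp: gs_GE Ecd_def)
  qed
qed

lemma gs_act: "g \<in> GG \<Longrightarrow> Y \<inter> gs g = {} \<Longrightarrow> g \<in> DD Y"
proof -
  assume g: "g \<in> GG" "Y \<inter> gs g = {}"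
  from GG_cases[OF g(1)] show ?thesis
  proof (elim disjE exE conjE)
    fix c assume c: "c \<in> {1..q}" "g = GC c"
    show ?thesis unfolding c(2) by (rule GC_act) (use c g in \<open>auto simp: gs_GC\<close>)
  next
    fix P assume P: "P \<in> colpairs q" "g = GE P"
    show ?thesis unfolding P(2) by (rule GE_act) (use P g in \<open>auto simp: gs_GE\<close>)
  qed
qed

lemma Y_gs_sum:
  assumes "H \<subseteq> GG" "finite Y"
  shows "(\<Sum>g\<in>H. card (Y \<inter> gs g)) = card (\<Union>g\<in>H. Y \<inter> gs g)"
proof -
  have fH: "finite H" using assms(1) finGG by (rule finite_subset)
  show ?thesis
  proof (rule card_UN_disjoint[symmetric, OF fH])
    show "\<forall>i\<in>H. finite (Y \<inter> gs i)" using assms(2) by auto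
    show "\<forall>i\<in>H. \<forall>j\<in>H. i \<noteq> j \<longrightarrow> Y \<inter> gs i \<inter> (Y \<inter> gs j) = {}"
      using gs_disj assms(1) by blast
  qed
qed

lemma sum_ge1_eq:
  fixes f :: "'b \<Rightarrow> nat"
  assumes "finite H" "\<forall>h\<in>H. 1 \<le> f h" "sum f H \<le> card H"
  shows "\<forall>h\<in>H. f h = 1"
proof (rule ccontr)
  assume "\<not> (\<forall>h\<in>H. f h = 1)"
  then obtain h where h: "h \<in> H" "f h \<noteq> 1" by blast
  have h1: "1 \<le> f h" using assms(2) h(1) by blast
  then have h2: "1 < f h" using h(2) by linarith
  have "sum (\<lambda>_. 1) H < sum f H"
  proof (rule sum_strict_mono_ex1[OF assms(1)])
    show "\<forall>x\<in>H. 1 \<le> f x" using assms(2) by blast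
    show "\<exists>a\<in>H. 1 < f a" using h(1) h2 by blast
  qed
  then show False using assms(3) by simp
qed

lemma card_ge_sum1:
  fixes f :: "'b \<Rightarrow> nat"
  assumes "\<forall>h\<in>H. 1 \<le> f h"
  shows "card H \<le> sum f H"
proof -
  have "sum (\<lambda>_. 1::nat) H \<le> sum f H" by (rule sum_mono) (use assms in auto)
  then show ?thesis by simp
qed

lemma X_pos: "1 \<le> 2*int nn*int q - 2*int nn + 1"
  using X_int[symmetric] by simp


lemma BB_GG: "BB \<inter> GG = {}" by (auto simp: Bnodes_def guards_def)
lemma BB_SEL: "BB \<inter> SEL = {}" by (auto simp: Bnodes_def)
lemma GG_SEL: "GG \<inter> SEL = {}"
proof -
  have h: "g \<notin> SEL" if "g \<in> GG" for g using GG_cases[OF that] by auto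
  show ?thesis
  proof (rule equals0I)
    fix x assume x: "x \<in> GG \<inter> SEL"
    then have x1: "x \<in> GG" and x2: "x \<in> SEL" by simp_all
    from h[OF x1] x2 show False by (rule notE)
  qed
qed

lemma finDD: "finite (DD Y)"
proof -
  have "DD Y \<subseteq> GV" by (rule order_trans[OF diffusion_sub Diff_subset])
  then show ?thesis using finGV by (rule finite_subset)
qed

lemma cardBB: "0 \<le> kval V E q \<Longrightarrow> int (card BB) = kval V E q"
proof -
  assume k: "0 \<le> kval V E q"
  have "BB = BN ` {..<nat (kval V E q)}" unfolding Bnodes_def by auto
  then have "card BB = nat (kval V E q)" by (simp add: card_image inj_on_def)
  then show ?thesis using k by simp
qed

lemma card_SEL: "card SEL = nn + card E"
proof -
  have "card SEL = card (XV ` V) + card (XE ` E)"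
    by (rule card_Un_disjoint) (use finV finE in auto)
  then show ?thesis by (simp add: card_image inj_on_def)
qed

lemma kval_neg:
  assumes "nn \<le> q" "card E \<le> q choose 2" "nn + card E < lval q"
  shows "kval V E q < 0"
proof -
  define a where "a = int nn - int q"
  define b where "b = int (card E) - int (q choose 2)"
  define X where "X = 2 * int nn * int q - 2 * int nn + 1"
  define Z where "Z = 4 * int nn + (1::int)"
  have a: "a \<le> 0" "b \<le> 0" "a + b < 0" using assms unfolding a_def b_def lval_def by auto
  have X: "1 \<le> X" unfolding X_def by (rule X_pos)
  have Z: "1 \<le> Z" unfolding Z_def by simp
  have "a * X \<le> a * 1" by (rule mult_left_mono_neg[OF X a(1)])
  moreover have "b * Z \<le> b * 1" by (rule mult_left_mono_neg[OF Z a(2)])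
  moreover have "kval V E q = a * X + b * Z" unfolding kval_def a_def b_def X_def Z_def by simp
  ultimately show ?thesis using a(3) by linarith
qed

lemma unhit_False:
  assumes Y: "Y \<subseteq> GV" "card Y \<le> lval q" "int (card (DD Y)) \<le> kval V E q"
    and g0: "g0 \<in> GG" "Y \<inter> gs g0 = {}"
  shows False
proof -
  have finY: "finite Y" using Y(1) finGV by (rule finite_subset)
  have k0: "0 \<le> kval V E q" using Y(3) by linarith
  have cBB: "int (card BB) = kval V E q" using cardBB[OF k0] .
  have "BB \<subseteq> GV" using inGV(6) by blast
  then have finBB: "finite BB" using finGV by (rule finite_subset)
  define H where "H = {g \<in> GG. Y \<inter> gs g \<noteq> {}}"
  define U where "U = GG - H"
  have HGG: "H \<subseteq> GG" unfolding H_def by blast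
  have UGG: "U \<subseteq> GG" unfolding U_def by blast
  have finH: "finite H" using HGG finGG by (rule finite_subset)
  have finU: "finite U" using UGG finGG by (rule finite_subset)
  have g0U: "g0 \<in> U" unfolding U_def H_def using g0 by blast
  have cHU: "card H + card U = lval q"
  proof -
    have "card (H \<union> U) = card H + card U"
      by (rule card_Un_disjoint[OF finH finU]) (auto simp: U_def)
    moreover have "H \<union> U = GG" unfolding U_def using HGG by blast
    ultimately show ?thesis using card_GG by simp
  qed
  have UD: "U \<subseteq> DD Y"
  proof
    fix g assume "g \<in> U"
    then have "g \<in> GG" "Y \<inter> gs g = {}" unfolding U_def H_def by auto
    then show "g \<in> DD Y" by (rule gs_act)
  qed
  have g0D: "g0 \<in> DD Y" using UD g0U by blast
  have BD: "BB - Y \<subseteq> DD Y"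
  proof
    fix w assume "w \<in> BB - Y"
    then have "w \<in> BB" "w \<notin> Y" by simp_all
    then show "w \<in> DD Y" using B_act[OF _ _ g0(1) g0D] by simp
  qed
  have SD: "SEL - Y \<subseteq> DD Y"
  proof
    fix w assume "w \<in> SEL - Y"
    then have "w \<in> SEL" "w \<notin> Y" by simp_all
    then show "w \<in> DD Y" by (rule sel_act)
  qed
  have finSEL: "finite SEL" using finV finE by simp
  define bb where "bb = card (Y \<inter> BB)"
  define s where "s = card (SEL - Y)"
  have bbY: "bb \<le> card Y" unfolding bb_def using finY by (intro card_mono) auto
  have bbB: "bb \<le> card BB" unfolding bb_def using finBB by (intro card_mono) auto
  have cBY: "card (BB - Y) = card BB - bb"
    unfolding bb_def using card_Diff_subset_Int[of BB Y] finBB by (simp add: Int_commute)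
  have cYB: "card (Y - BB) = card Y - bb"
    unfolding bb_def using card_Diff_subset_Int[of Y BB] finY by simp
  have low: "card (BB - Y) + card U + s \<le> card (DD Y)"
  proof -
    have d1: "(BB - Y) \<inter> U = {}" using BB_GG UGG by blast
    have d2: "((BB - Y) \<union> U) \<inter> (SEL - Y) = {}" using BB_SEL GG_SEL UGG by blast
    have f1: "finite (BB - Y)" using finBB by simp
    have f2: "finite (SEL - Y)" using finSEL by simp
    have "card ((BB - Y) \<union> U \<union> (SEL - Y)) = card (BB - Y) + card U + s"
      unfolding s_def using card_Un_disjoint[OF f1 finU d1] card_Un_disjoint[OF _ f2 d2] f1 finU by simp
    moreover have "card ((BB - Y) \<union> U \<union> (SEL - Y)) \<le> card (DD Y)"
      by (rule card_mono[OF finDD]) (use BD UD SD in blast)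
    ultimately show ?thesis by simp
  qed
  have H1: "\<forall>g\<in>H. 1 \<le> card (Y \<inter> gs g)"
  proof
    fix g assume "g \<in> H"
    then have "Y \<inter> gs g \<noteq> {}" unfolding H_def by blast
    moreover have "finite (Y \<inter> gs g)" using finY by simp
    ultimately show "1 \<le> card (Y \<inter> gs g)" by (simp add: Suc_le_eq card_gt_0_iff)
  qed
  have sumH: "(\<Sum>g\<in>H. card (Y \<inter> gs g)) \<le> card Y - bb"
  proof -
    have "(\<Sum>g\<in>H. card (Y \<inter> gs g)) = card (\<Union>g\<in>H. Y \<inter> gs g)" by (rule Y_gs_sum[OF HGG finY])
    also have "\<dots> \<le> card (Y - BB)"
    proof (rule card_mono)
      show "finite (Y - BB)" using finY by simp
      show "(\<Union>g\<in>H. Y \<inter> gs g) \<subseteq> Y - BB"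
      proof
        fix x assume "x \<in> (\<Union>g\<in>H. Y \<inter> gs g)"
        then obtain g where "g \<in> H" "x \<in> Y" "x \<in> gs g" by blast
        then have "x \<in> GG \<union> SEL" using gs_sub[of g] HGG by blast
        then show "x \<in> Y - BB" using \<open>x \<in> Y\<close> BB_GG BB_SEL by blast
      qed
    qed
    finally show ?thesis using cYB by simp
  qed
  have cH: "card H \<le> (\<Sum>g\<in>H. card (Y \<inter> gs g))" by (rule card_ge_sum1[OF H1])
  have bbU: "bb \<le> card U" using cH sumH cHU Y(2) bbY by linarith
  have "int (card BB) - int bb + int (card U) + int s \<le> kval V E q"
    using low cBY bbB Y(3) by linarith
  then have "int (card U) + int s \<le> int bb" using cBB by linarith
  then have s0: "s = 0" and Ubb: "card U = bb" using bbU by auto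
  have SELY: "SEL \<subseteq> Y"
  proof -
    have "SEL - Y = {}" using s0 finSEL unfolding s_def by simp
    then show ?thesis by blast
  qed
  have one: "\<forall>g\<in>H. card (Y \<inter> gs g) = 1"
    by (rule sum_ge1_eq[OF finH H1]) (use sumH cHU Y(2) Ubb bbY in linarith)
  have U1: "1 \<le> card U" using g0U finU by (simp add: Suc_le_eq card_gt_0_iff) blast
  have gbound: "card (gs g \<inter> SEL) \<le> 1" if g: "g \<in> GG" for g
  proof (cases "g \<in> H")
    case True
    have "gs g \<inter> SEL \<subseteq> Y \<inter> gs g" using SELY by blast
    then have "card (gs g \<inter> SEL) \<le> card (Y \<inter> gs g)" by (intro card_mono) (use finY in auto)
    then show ?thesis using one True by simp
  next
    case False
    then have "Y \<inter> gs g = {}" unfolding H_def using g by blast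
    then have "gs g \<inter> SEL = {}" using SELY by blast
    then show ?thesis by simp
  qed
  have nq: "nn \<le> q"
  proof -
    have "V = (\<Union>c\<in>{1..q}. {v \<in> V. col v = c})" using col_range by auto
    then have "nn \<le> (\<Sum>c\<in>{1..q}. card {v \<in> V. col v = c})"
      using card_UN_le[of "{1..q}" "\<lambda>c. {v \<in> V. col v = c}"] by simp
    also have "\<dots> \<le> (\<Sum>c\<in>{1..q}. 1)"
    proof (rule sum_mono)
      fix c assume c: "c \<in> {1..q}"
      then have "GC c \<in> GG" unfolding guards_def by blast
      then have "card (gs (GC c) \<inter> SEL) \<le> 1" by (rule gbound)
      moreover have "gs (GC c) \<inter> SEL = XV ` {v \<in> V. col v = c}" by (auto simp: gs_GC)
      ultimately show "card {v \<in> V. col v = c} \<le> 1" by (simp add: card_image inj_on_def)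
    qed
    finally show ?thesis by simp
  qed
  have mC: "card E \<le> q choose 2"
  proof -
    have "E = (\<Union>P\<in>colpairs q. Ecd E col P)"
    proof
      show "E \<subseteq> (\<Union>P\<in>colpairs q. Ecd E col P)"
      proof
        fix e assume e: "e \<in> E"
        show "e \<in> (\<Union>P\<in>colpairs q. Ecd E col P)" using E_pair[OF e] E_Ecd[OF e] by (rule UN_I)
      qed
      show "(\<Union>P\<in>colpairs q. Ecd E col P) \<subseteq> E" using Ecd_sub by (rule UN_least)
    qed
    then have "card E \<le> (\<Sum>P\<in>colpairs q. card (Ecd E col P))"
      using card_UN_le[OF fin_colpairs, of "\<lambda>P. Ecd E col P"] by simp
    also have "\<dots> \<le> (\<Sum>P\<in>colpairs q. 1)"
    proof (rule sum_mono)
      fix P assume P: "P \<in> colpairs q"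
      then have "GE P \<in> GG" unfolding guards_def by blast
      then have "card (gs (GE P) \<inter> SEL) \<le> 1" by (rule gbound)
      moreover have "gs (GE P) \<inter> SEL = XE ` Ecd E col P" using Ecd_sub by (auto simp: gs_GE)
      ultimately show "card (Ecd E col P) \<le> 1" by (simp add: card_image inj_on_def)
    qed
    finally show ?thesis using card_colpairs by simp
  qed
  have "card SEL \<le> card (Y - BB)"
    by (rule card_mono) (use finY SELY BB_SEL in auto)
  then have "nn + card E < lval q" using card_SEL cYB Y(2) Ubb U1 bbY by linarith
  then have "kval V E q < 0" by (rule kval_neg[OF nq mC])
  then show False using k0 by simp
qed


lemma val_active:
  assumes YCN: "Y \<inter> CN = {}" and Adef: "A = {v \<in> V. XV v \<in> Y}" and Fdef: "F = {e \<in> E. XE e \<in> Y}"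
    and injA: "inj_on col A" and injF: "inj_on (\<lambda>e. col ` e) F"
    and ValY: "\<And>P c b. Val P c b \<notin> Y"
    and e: "e \<in> F" "x \<in> e" "u \<in> A" "col x = col u" "x \<noteq> u"
  shows "\<exists>P c b. Val P c b \<in> DD Y"
proof -
  have eE: "e \<in> E" using e(1) Fdef by blast
  obtain a1 a2 where a12: "e = {a1, a2}" "a1 \<in> V" "a2 \<in> V" "a1 \<noteq> a2" "col a1 \<noteq> col a2"
    using E_elem[OF eE] by blast
  have xV: "x \<in> V" using a12 e(2) by blast
  have uV: "u \<in> V" using e(3) Adef by blast
  have colinj: "\<And>v. v \<in> e \<Longrightarrow> col v = col x \<Longrightarrow> v = x" using a12 e(2) by auto
  define P where "P = col ` e"
  define c where "c = col u"
  have P: "P \<in> colpairs q" unfolding P_def by (rule E_pair[OF eE])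
  have cP: "c \<in> P" unfolding P_def c_def using e(2) e(4) by (metis imageI)
  have lowne: "low x \<noteq> low u" using low_inj xV uV e(5) unfolding inj_on_def by blast
  have lx: "1 \<le> low x" "low x \<le> nn" using low_bounds[OF xV] by auto
  have lu: "1 \<le> low u" "low u \<le> nn" using low_bounds[OF uV] by auto
  define b where "b = (low x < low u)"
  define s1 where "s1 = (if b then highv nn low u else low u)"
  define s2 where "s2 = (if b then low x else highv nn low x)"
  have s12: "s1 + s2 < 2 * nn"
  proof (cases b)
    case True then show ?thesis unfolding s1_def s2_def highv_def b_def using lx lu by auto
  next
    case False then have "low u < low x" using lowne unfolding b_def by auto
    then show ?thesis unfolding s1_def s2_def highv_def using False lx lu by auto
  qed
  define R1 where "R1 = (\<lambda>i. Conn P c b (XV u) i) ` {..<s1}"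
  define R2 where "R2 = (\<lambda>i. Conn P c b (XE e) i) ` {..<s2}"
  define N where "N = nbrs GV adj (Val P c b)"
  have finN: "finite N" unfolding N_def nbrs_def using finGV by simp
  have sub: "N - (R1 \<union> R2) \<subseteq> DD Y"
  proof
    fix w assume w: "w \<in> N - (R1 \<union> R2)"
    then have "adj (Val P c b) w" unfolding N_def nbrs_def by blast
    then have wCN: "w \<in> CN" and "\<exists>x' i. w = Conn P c b x' i" using adj_Val by blast+
    then obtain x' i where wx: "w = Conn P c b x' i" by blast
    have wY: "w \<notin> Y" using YCN wCN by blast
    show "w \<in> DD Y"
    proof (cases "x' \<in> Y")
      case False
      then show ?thesis using conn_act[of P c b x' i Y] wCN wY wx by simp
    next
      case True
      have "x' \<in> SEL" using CN_sel wCN wx by simp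
      then have "(\<exists>v'. x' = XV v') \<or> (\<exists>e'. x' = XE e')" by blast
      then show ?thesis
      proof (elim disjE exE)
        fix v' assume xv: "x' = XV v'"
        have "Conn P c b (XV v') i \<in> CN" using wCN wx xv by simp
        then have v': "v' \<in> V" "col v' = c" "i < (if b then highv nn low v' else low v')"
          unfolding CN_XV by auto
        have "v' \<in> A" using Adef v' True xv by simp
        then have "v' = u" using injA e(3) v'(2) unfolding c_def inj_on_def by blast
        then have "w \<in> R1" unfolding R1_def s1_def using wx xv v'(3) by auto
        then show ?thesis using w by blast
      next
        fix e' assume xe: "x' = XE e'"
        have "Conn P c b (XE e') i \<in> CN" using wCN wx xe by simp
        then have e': "e' \<in> Ecd E col P" "\<exists>v\<in>e'. col v = c \<and> i < (if b then low v else highv nn low v)"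
          unfolding CN_XE by auto
        have "e' \<in> E" using e'(1) Ecd_sub by blast
        then have "e' \<in> F" using Fdef True xe by simp
        moreover have "col ` e' = col ` e" using e'(1) unfolding Ecd_def P_def by simp
        ultimately have "e' = e" using injF e(1) unfolding inj_on_def by blast
        then obtain v where v: "v \<in> e" "col v = c" "i < (if b then low v else highv nn low v)"
          using e'(2) by blast
        have "v = x" using colinj v(1) v(2) e(4) unfolding c_def by simp
        then have "w \<in> R2" unfolding R2_def s2_def using wx xe \<open>e' = e\<close> v(3) by auto
        then show ?thesis using w by blast
      qed
    qed
  qed
  have cR: "card (R1 \<union> R2) \<le> s1 + s2"
  proof -
    have "card (R1 \<union> R2) \<le> card R1 + card R2" by (rule card_Un_le)
    moreover have "card R1 \<le> s1" unfolding R1_def using card_image_le[of "{..<s1}"] by simp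
    moreover have "card R2 \<le> s2" unfolding R2_def using card_image_le[of "{..<s2}"] by simp
    ultimately show ?thesis by linarith
  qed
  have finR: "finite (R1 \<union> R2)" unfolding R1_def R2_def by simp
  have cD: "card N - card (R1 \<union> R2) \<le> card (N - (R1 \<union> R2))"
    by (rule diff_card_le_card_Diff[OF finR])
  have th: "th (Val P c b) = card N + 1 - 2 * nn" unfolding N_def by (rule th_simps(7))
  have thle: "th (Val P c b) \<le> card (N - (R1 \<union> R2))"
    using cD cR s12 th by linarith
  have "Val P c b \<in> DD Y"
  proof (rule diff_step[OF finGV _ _ sub thle])
    show "Val P c b \<in> GV - Y" using inGV(4)[of P c b] P cP ValY[of P c b] validx_iff by blast
    show "N - (R1 \<union> R2) \<subseteq> nbrs GV adj (Val P c b)" unfolding N_def by blast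
  qed
  then show ?thesis by blast
qed

lemma CN_GG_SEL: "w \<in> CN \<Longrightarrow> w \<notin> GG \<union> SEL"
proof -
  assume "w \<in> CN"
  then have "\<exists>P c b x i. w = Conn P c b x i" by (rule CN_form)
  then obtain P c b x i where "w = Conn P c b x i" by blast
  then show ?thesis by (auto simp: guards_def)
qed

lemma kval_gap:
  assumes "A \<subseteq> V" "F \<subseteq> E" "card A \<le> q" "card F \<le> q choose 2"
  shows "kval V E q + (int q - int (card A)) + (int (q choose 2) - int (card F)) \<le> int (card (SS A F))"
proof -
  define a where "a = int q - int (card A)"
  define b where "b = int (q choose 2) - int (card F)"
  define X where "X = 2 * int nn * int q - 2 * int nn + 1"
  define Z where "Z = 4 * int nn + (1::int)"
  have a: "0 \<le> a" "0 \<le> b" using assms unfolding a_def b_def by auto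
  have X: "1 \<le> X" unfolding X_def by (rule X_pos)
  have Z: "1 \<le> Z" unfolding Z_def by simp
  have "a * 1 \<le> a * X" by (rule mult_left_mono[OF X a(1)])
  moreover have "b * 1 \<le> b * Z" by (rule mult_left_mono[OF Z a(2)])
  moreover have "int (card (SS A F)) = kval V E q + a * X + b * Z"
    unfolding card_SS_int[OF assms(1,2)] kval_def a_def b_def X_def Z_def by (simp add: algebra_simps)
  ultimately have "kval V E q + a + b \<le> int (card (SS A F))" by linarith
  then show ?thesis unfolding a_def b_def .
qed


lemma allhit:
  assumes Y: "Y \<subseteq> GV" "card Y \<le> lval q" "int (card (DD Y)) \<le> kval V E q"
    and hit: "\<forall>g\<in>GG. Y \<inter> gs g \<noteq> {}"
  shows "\<exists>K\<subseteq>V. card K = q \<and> is_clique E K"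
proof -
  have finY: "finite Y" using Y(1) finGV by (rule finite_subset)
  have H1: "\<forall>g\<in>GG. 1 \<le> card (Y \<inter> gs g)"
  proof
    fix g assume "g \<in> GG"
    then have "Y \<inter> gs g \<noteq> {}" using hit by blast
    moreover have "finite (Y \<inter> gs g)" using finY by simp
    ultimately show "1 \<le> card (Y \<inter> gs g)" by (simp add: Suc_le_eq card_gt_0_iff)
  qed
  have sumeq: "(\<Sum>g\<in>GG. card (Y \<inter> gs g)) = card (\<Union>g\<in>GG. Y \<inter> gs g)"
    by (rule Y_gs_sum[OF subset_refl finY])
  have Usub: "(\<Union>g\<in>GG. Y \<inter> gs g) \<subseteq> Y" by blast
  have cU: "card (\<Union>g\<in>GG. Y \<inter> gs g) \<le> card Y" by (rule card_mono[OF finY Usub])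
  have one: "\<forall>g\<in>GG. card (Y \<inter> gs g) = 1"
    by (rule sum_ge1_eq[OF finGG H1]) (use sumeq cU Y(2) card_GG in linarith)
  have cGG: "card GG \<le> (\<Sum>g\<in>GG. card (Y \<inter> gs g))" by (rule card_ge_sum1[OF H1])
  have Ueq: "(\<Union>g\<in>GG. Y \<inter> gs g) = Y"
    by (rule card_subset_eq[OF finY Usub]) (use cGG sumeq cU Y(2) card_GG in linarith)
  have Ysub: "Y \<subseteq> GG \<union> SEL"
  proof
    fix y assume "y \<in> Y"
    then obtain g where g: "g \<in> GG" "y \<in> gs g" using Ueq by blast
    then show "y \<in> GG \<union> SEL" using gs_sub[OF g(1)] by blast
  qed
  have YCN: "Y \<inter> CN = {}" using Ysub CN_GG_SEL by blast
  have ValY: "\<And>P c b. Val P c b \<notin> Y"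
  proof
    fix P c b assume "Val P c b \<in> Y"
    then have "Val P c b \<in> GG \<union> SEL" using Ysub by blast
    then show False by (auto simp: guards_def)
  qed
  have uniq: "\<And>g a a'. g \<in> GG \<Longrightarrow> a \<in> Y \<inter> gs g \<Longrightarrow> a' \<in> Y \<inter> gs g \<Longrightarrow> a = a'"
  proof -
    fix g a a' assume g: "g \<in> GG" "a \<in> Y \<inter> gs g" "a' \<in> Y \<inter> gs g"
    have "card (Y \<inter> gs g) = 1" using one g(1) by blast
    then obtain z where "Y \<inter> gs g = {z}" by (rule card_1_singletonE)
    then have "a = z" "a' = z" using g(2,3) by auto
    then show "a = a'" by simp
  qed
  define A where "A = {v \<in> V. XV v \<in> Y}"
  define F where "F = {e \<in> E. XE e \<in> Y}"
  have AV: "A \<subseteq> V" unfolding A_def by blast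
  have FE: "F \<subseteq> E" unfolding F_def by blast
  have finA: "finite A" using AV finV by (rule finite_subset)
  have finF: "finite F" using FE finE by (rule finite_subset)
  have ASY: "AS A F \<inter> Y = {}" unfolding AS_def A_def F_def by blast
  have SSD: "SS A F \<subseteq> DD Y" by (rule SS_lower[OF ASY YCN])
  have injA: "inj_on col A"
  proof (rule inj_onI)
    fix v w assume vw: "v \<in> A" "w \<in> A" "col v = col w"
    have c: "col v \<in> {1..q}" using vw(1) AV col_range by blast
    then have g: "GC (col v) \<in> GG" unfolding guards_def by blast
    have "XV v \<in> Y \<inter> gs (GC (col v))" using vw(1) unfolding A_def by (auto simp: gs_GC)
    moreover have "XV w \<in> Y \<inter> gs (GC (col v))" using vw(2,3) unfolding A_def by (auto simp: gs_GC)
    ultimately have "XV v = XV w" using uniq[OF g] by blast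
    then show "v = w" by simp
  qed
  have injF: "inj_on (\<lambda>e. col ` e) F"
  proof (rule inj_onI)
    fix e e' assume ee: "e \<in> F" "e' \<in> F" "col ` e = col ` e'"
    have eE: "e \<in> E" "e' \<in> E" using ee FE by blast+
    have g: "GE (col ` e) \<in> GG" using E_pair[OF eE(1)] unfolding guards_def by blast
    have "XE e \<in> Y \<inter> gs (GE (col ` e))" using ee(1) E_Ecd[OF eE(1)] unfolding F_def by (auto simp: gs_GE)
    moreover have "XE e' \<in> Y \<inter> gs (GE (col ` e))" using ee(2,3) E_Ecd[OF eE(2)] unfolding F_def by (auto simp: gs_GE)
    ultimately have "XE e = XE e'" using uniq[OF g] by blast
    then show "e = e'" by simp
  qed
  have colAsub: "col ` A \<subseteq> {1..q}" using AV col_range by blast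
  have colFsub: "(\<lambda>e. col ` e) ` F \<subseteq> colpairs q" using FE E_pair by blast
  have cA: "card A \<le> q"
  proof -
    have "card A = card (col ` A)" using card_image[OF injA] by simp
    also have "\<dots> \<le> card {1..q}" by (rule card_mono[OF _ colAsub]) simp
    finally show ?thesis by simp
  qed
  have cF: "card F \<le> q choose 2"
  proof -
    have "card F = card ((\<lambda>e. col ` e) ` F)" using card_image[OF injF] by simp
    also have "\<dots> \<le> card (colpairs q)" by (rule card_mono[OF fin_colpairs colFsub])
    finally show ?thesis using card_colpairs by simp
  qed
  have SSle: "int (card (SS A F)) \<le> kval V E q"
  proof -
    have "card (SS A F) \<le> card (DD Y)" by (rule card_mono[OF finDD SSD])
    then show ?thesis using Y(3) by linarith
  qed
  have gap: "kval V E q + (int q - int (card A)) + (int (q choose 2) - int (card F)) \<le> int (card (SS A F))"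
    by (rule kval_gap[OF AV FE cA cF])
  have Aq: "card A = q" using gap SSle cA cF by linarith
  have Fq: "card F = q choose 2" using gap SSle cA cF by linarith
  have colA: "col ` A = {1..q}"
    by (rule card_subset_eq[OF _ colAsub]) (use card_image[OF injA] Aq in simp_all)
  have colF: "(\<lambda>e. col ` e) ` F = colpairs q"
    by (rule card_subset_eq[OF fin_colpairs colFsub]) (use card_image[OF injF] Fq card_colpairs in simp)
  have SSk: "int (card (SS A F)) = kval V E q"
    using card_SS_int[OF AV FE] Aq Fq unfolding kval_def by simp
  have consist: "x = u" if xu: "e \<in> F" "x \<in> e" "u \<in> A" "col x = col u" for e x u
  proof (rule ccontr)
    assume "x \<noteq> u"
    then have "\<exists>P c b. Val P c b \<in> DD Y"
      by (intro val_active[OF YCN A_def F_def injA injF ValY xu])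
    then obtain P c b where vD: "Val P c b \<in> DD Y" by blast
    have "Val P c b \<notin> SS A F" by (rule SS_not(3))
    then have "card (insert (Val P c b) (SS A F)) = Suc (card (SS A F))"
      using finite_subset[OF SSD finDD] by simp
    moreover have "card (insert (Val P c b) (SS A F)) \<le> card (DD Y)"
      by (rule card_mono[OF finDD]) (use vD SSD in blast)
    ultimately show False using Y(3) SSk by linarith
  qed
  have "is_clique E A"
    unfolding is_clique_def
  proof (intro ballI impI)
    fix u w assume uw: "u \<in> A" "w \<in> A" "u \<noteq> w"
    have cne: "col u \<noteq> col w" using injA uw unfolding inj_on_def by blast
    have cu: "col u \<in> {1..q}" "col w \<in> {1..q}" using uw AV col_range by blast+
    have "{col u, col w} \<in> colpairs q" by (rule colpairs_mem[OF cu cne])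
    then obtain e where e: "e \<in> F" "col ` e = {col u, col w}" using colF by (metis imageE)
    have "col u \<in> col ` e" using e(2) by simp
    then obtain x where x: "x \<in> e" "col x = col u" by (metis imageE)
    have "w \<in> A" using uw by simp
    have "col w \<in> col ` e" using e(2) by simp
    then obtain y where y: "y \<in> e" "col y = col w" by (metis imageE)
    have xu: "x = u" by (rule consist[OF e(1) x(1) uw(1) x(2)])
    have yw: "y = w" by (rule consist[OF e(1) y(1) uw(2) y(2)])
    have eE: "e \<in> E" using e(1) FE by blast
    obtain a1 a2 where a12: "e = {a1, a2}" "a1 \<noteq> a2" using E_elem[OF eE] by blast
    have "u \<in> e" "w \<in> e" using x y xu yw by simp_all
    then have "e = {u, w}" using a12 uw(3) by auto
    then show "{u, w} \<in> E" using eE by simp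
  qed
  then show ?thesis using AV Aq by blast
qed

lemma backward:
  assumes Y: "Y \<subseteq> GV" "card Y \<le> lval q" "int (card (DD Y)) \<le> kval V E q"
  shows "\<exists>K\<subseteq>V. card K = q \<and> is_clique E K"
proof (cases "\<forall>g\<in>GG. Y \<inter> gs g \<noteq> {}")
  case True then show ?thesis by (rule allhit[OF Y])
next
  case False
  then obtain g0 where "g0 \<in> GG" "Y \<inter> gs g0 = {}" by blast
  then show ?thesis using unhit_False[OF Y] by blast
qed

end

theorem lemma2:
  fixes V :: "'a set" and E :: "'a set set" and col :: "'a \<Rightarrow> nat"
    and q :: nat and low :: "'a \<Rightarrow> nat"
  assumes finV: "finite V"
    and simple: "E \<subseteq> {{u, v} | u v. u \<in> V \<and> v \<in> V \<and> u \<noteq> v}"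
    and col_range: "\<forall>v\<in>V. col v \<in> {1..q}"
    and col_proper: "\<forall>u v. {u, v} \<in> E \<longrightarrow> col u \<noteq> col v"
    and low_inj: "inj_on low V"
    and low_range: "low ` V \<subseteq> {1..card V}"
  shows "(\<exists>K \<subseteq> V. card K = q \<and> is_clique E K) \<longleftrightarrow>
         (\<exists>Y \<subseteq> Gp_V V E col q low. card Y \<le> lval q \<and>
            int (card (diffusion (Gp_V V E col q low) (Gp_adj V E col q low)
                                 (Gp_t V E col q low) Y)) \<le> kval V E q)"
proof -
  interpret red V E col q low
    using finV simple col_range col_proper low_inj low_range by unfold_locales
  show ?thesis
  proof
    assume "\<exists>K \<subseteq> V. card K = q \<and> is_clique E K"
    then obtain K where K: "K \<subseteq> V" "card K = q" "is_clique E K" by blast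
    show "\<exists>Y \<subseteq> Gp_V V E col q low. card Y \<le> lval q \<and>
            int (card (diffusion (Gp_V V E col q low) (Gp_adj V E col q low)
                                 (Gp_t V E col q low) Y)) \<le> kval V E q"
      by (rule forward[OF K])
  next
    assume "\<exists>Y \<subseteq> Gp_V V E col q low. card Y \<le> lval q \<and>
            int (card (diffusion (Gp_V V E col q low) (Gp_adj V E col q low)
                                 (Gp_t V E col q low) Y)) \<le> kval V E q"
    then obtain Y where Y: "Y \<subseteq> Gp_V V E col q low" "card Y \<le> lval q"
      "int (card (diffusion (Gp_V V E col q low) (Gp_adj V E col q low)
                                 (Gp_t V E col q low) Y)) \<le> kval V E q" by blast
    show "\<exists>K \<subseteq> V. card K = q \<and> is_clique E K" by (rule backward[OF Y])
  qed
qed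

end
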